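(* Suppose the Tanner graph of $\mathcal H$ is a tree. Then $\bar{\mathcal Q}(\mathcal H)=\{f:\exists\,w\text{ with }(f,w)\in\mathcal Q(\mathcal H)\}$ equals $\mathcal K(\mathcal C)$, the convex hull of $\{\Xi(c):c\in\mathcal C\}$ in $\mathbb R^{(q-1)n}$.
   Context: Let $R$ be a finite ring with $q$ elements, $R^-=R\setminus\{0\}$, $\mathcal H$ an $m\times n$ matrix over $R$, $\mathcal C=\{c\in R^n:c\mathcal H^T=0\}$, $\mathcal I=\{1,\dots,n\}$, $\mathcal J=\{1,\dots,m\}$, $\mathcal I_j=\{i:\mathcal H_{j,i}\ne0\}$, $\mathcal C_j=\{b\in R^{\mathcal I_j}:\sum_{i\in\mathcal I_j}b_i\mathcal H_{j,i}=0\}$. The Tanner graph of $\mathcal H$ is the bipartite graph on variable vertices $u_1,\dots,u_n$ and check vertices $v_1,\dots,v_m$ with an edge $u_iv_j$ iff $\mathcal H_{j,i}\ne0$. Let $\xi:R\to\{0,1\}^{q-1}$ (coordinates indexed by $R^-$), $\xi(a)^{(\gamma)}=1$ iff $\gamma=a$, and $\Xi(c)=(\xi(c_1)\mid\cdots\mid\xi(c_n))$; coordinates of $f\in\mathbb R^{(q-1)n}$ are $f_i^{(\alpha)}$. $\mathcal Q(\mathcal H)$ is the set of $(f,w)$, $w=(w_{j,b})_{j\in\mathcal J,b\in\mathcal C_j}$, with $w_{j,b}\ge0$, $\sum_{b\in\mathcal C_j}w_{j,b}=1$ for each $j$, and $f_i^{(\alpha)}=\sum_{b\in\mathcal C_j,b_i=\alpha}w_{j,b}$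 for all $j$, $i\in\mathcal I_j$, $\alpha\in R^-$. *)

theory Defs
  imports "HOL-Analysis.Analysis"
begin

text \<open>Parity-check matrix H: rows indexed by the finite type 'm (check indices J),
columns by the finite type 'n (variable indices I); entries in a finite ring 'r.
H j i is the entry H_{j,i}.\<close>

definition tanner_adj :: "('m \<Rightarrow> 'n \<Rightarrow> 'r::zero) \<Rightarrow> ('n + 'm) \<Rightarrow> ('n + 'm) \<Rightarrow> bool" where
  "tanner_adj H x y \<longleftrightarrow>
     (\<exists>i j. ((x = Inl i \<and> y = Inr j) \<or> (x = Inr j \<and> y = Inl i)) \<and> H j i \<noteq> 0)"

definition graph_connected :: "('v \<Rightarrow> 'v \<Rightarrow> bool) \<Rightarrow> bool" where
  "graph_connected E \<longleftrightarrow> (\<forall>x y. E\<^sup>*\<^sup>* x y)"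

definition graph_has_cycle :: "('v \<Rightarrow> 'v \<Rightarrow> bool) \<Rightarrow> bool" where
  "graph_has_cycle E \<longleftrightarrow>
     (\<exists>vs. length vs \<ge> 3 \<and> distinct vs \<and>
        (\<forall>k < length vs - 1. E (vs ! k) (vs ! Suc k)) \<and> E (last vs) (hd vs))"

definition graph_is_tree :: "('v \<Rightarrow> 'v \<Rightarrow> bool) \<Rightarrow> bool" where
  "graph_is_tree E \<longleftrightarrow> graph_connected E \<and> \<not> graph_has_cycle E"

definition code :: "('m \<Rightarrow> 'n::finite \<Rightarrow> 'r::ring_1) \<Rightarrow> ('n \<Rightarrow> 'r) set" where
  "code H = {c. \<forall>j. (\<Sum>i\<in>UNIV. c i * H j i) = 0}"

definition supp_row :: "('m \<Rightarrow> 'n \<Rightarrow> 'r::zero) \<Rightarrow> 'm \<Rightarrow> 'n set" where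
  "supp_row H j = {i. H j i \<noteq> 0}"

text \<open>Local code C_j \<subseteq> R^{I_j}; a word b \<in> R^{I_j} is represented by the function
that is b on I_j and 0 outside I_j.\<close>
definition local_code :: "('m \<Rightarrow> 'n::finite \<Rightarrow> 'r::ring_1) \<Rightarrow> 'm \<Rightarrow> ('n \<Rightarrow> 'r) set" where
  "local_code H j = {b. (\<forall>i. i \<notin> supp_row H j \<longrightarrow> b i = 0) \<and>
                         (\<Sum>i\<in>supp_row H j. b i * H j i) = 0}"

text \<open>R^{(q-1)n} is represented by the subspace of real^('n \<times> 'r) whose
coordinates (i,0) vanish; coordinate (i,\<alpha>) with \<alpha> \<noteq> 0 is f_i^{(\<alpha>)}.\<close>
definition Xi :: "('n::finite \<Rightarrow> 'r::{zero,finite}) \<Rightarrow> real ^ ('n \<times> 'r)" where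
  "Xi c = (\<chi> p. if snd p \<noteq> 0 \<and> c (fst p) = snd p then 1 else 0)"

definition polytope_Q :: "('m \<Rightarrow> 'n::finite \<Rightarrow> 'r::{ring_1,finite})
      \<Rightarrow> ((real ^ ('n \<times> 'r)) \<times> ('m \<Rightarrow> ('n \<Rightarrow> 'r) \<Rightarrow> real)) set" where
  "polytope_Q H = {(f, w).
     (\<forall>i. (f $ (i, 0)) = 0) \<and>
     (\<forall>j. \<forall>b\<in>local_code H j. w j b \<ge> 0) \<and>
     (\<forall>j. (\<Sum>b\<in>local_code H j. w j b) = 1) \<and>
     (\<forall>j. \<forall>i\<in>supp_row H j. \<forall>\<alpha>. \<alpha> \<noteq> 0 \<longrightarrow>
         (f $ (i, \<alpha>)) = (\<Sum>b\<in>{b\<in>local_code H j. b i = \<alpha>}. w j b))}"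

definition polytope_Qbar :: "('m \<Rightarrow> 'n::finite \<Rightarrow> 'r::{ring_1,finite}) \<Rightarrow> (real ^ ('n \<times> 'r)) set" where
  "polytope_Qbar H = {f. \<exists>w. (f, w) \<in> polytope_Q H}"

end

theory Submission imports Defs begin

definition restr :: "'n set \<Rightarrow> ('n \<Rightarrow> 'r::zero) \<Rightarrow> ('n \<Rightarrow> 'r)" where
  "restr S c = (\<lambda>i. if i \<in> S then c i else 0)"

definition marg :: "'n set \<Rightarrow> (('n::finite \<Rightarrow> 'r::{zero,finite}) \<Rightarrow> real) \<Rightarrow> ('n \<Rightarrow> 'r) \<Rightarrow> real" where
  "marg S P b = (\<Sum>c\<in>UNIV. if restr S c = b then P c else 0)"

definition suppd :: "'n set \<Rightarrow> (('n \<Rightarrow> 'r::zero) \<Rightarrow> real) \<Rightarrow> bool" where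
  "suppd S P \<longleftrightarrow> (\<forall>c. P c \<noteq> 0 \<longrightarrow> restr S c = c)"

lemma restr_restr: "A \<subseteq> B \<Longrightarrow> restr A (restr B c) = restr A c"
  by (auto simp: restr_def fun_eq_iff)

lemma restr_idem[simp]: "restr A (restr A c) = restr A c"
  by (auto simp: restr_def fun_eq_iff)

lemma marg_marg:
  assumes "A \<subseteq> B" shows "marg A (marg B P) = marg A P"
proof
  fix b
  have "marg A (marg B P) b = (\<Sum>d\<in>UNIV. \<Sum>c\<in>UNIV. if restr A d = b \<and> restr B c = d then P c else 0)"
    unfolding marg_def by (intro sum.cong refl) (auto intro: sum.neutral)
  also have "\<dots> = (\<Sum>c\<in>UNIV. \<Sum>d\<in>UNIV. if restr A d = b \<and> restr B c = d then P c else 0)"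
    by (rule sum.swap)
  also have "\<dots> = (\<Sum>c\<in>UNIV. if restr A (restr B c) = b then P c else 0)"
  proof (intro sum.cong refl)
    fix c
    have "(\<Sum>d\<in>UNIV. if restr A d = b \<and> restr B c = d then P c else 0)
        = (\<Sum>d\<in>UNIV. if restr B c = d then (if restr A d = b then P c else 0) else 0)"
      by (intro sum.cong refl) auto
    also have "\<dots> = (if restr A (restr B c) = b then P c else 0)"
      by (simp add: sum.delta)
    finally show "(\<Sum>d\<in>UNIV. if restr A d = b \<and> restr B c = d then P c else 0) = (if restr A (restr B c) = b then P c else 0)" .
  qed
  also have "\<dots> = marg A P b" unfolding marg_def by (simp add: restr_restr[OF assms])
  finally show "marg A (marg B P) b = marg A P b" .
qed

lemma marg_supp:
  assumes "suppd S Q" shows "marg S Q = Q"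
proof
  fix b
  have "marg S Q b = (\<Sum>c\<in>UNIV. if c = b then Q c else 0)"
    unfolding marg_def
    by (intro sum.cong refl) (use assms in \<open>auto simp: suppd_def\<close>)
  then show "marg S Q b = Q b" by (simp add: sum.delta')
qed

lemma sum_marg: "sum (marg S P) UNIV = sum P UNIV"
proof -
  have "sum (marg S P) UNIV = (\<Sum>c\<in>UNIV. \<Sum>b\<in>UNIV. if restr S c = b then P c else 0)"
    unfolding marg_def by (rule sum.swap)
  also have "\<dots> = sum P UNIV" by (simp add: sum.delta)
  finally show ?thesis .
qed

lemma marg_nonneg: "\<forall>c. 0 \<le> P c \<Longrightarrow> 0 \<le> marg S P b"
  unfolding marg_def by (intro sum_nonneg) auto

lemma marg_ge:
  assumes "\<forall>c. 0 \<le> P c" shows "P c \<le> marg S P (restr S c)"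
proof -
  have "P c = (if restr S c = restr S c then P c else 0)" by simp
  also have "\<dots> \<le> marg S P (restr S c)" unfolding marg_def
    by (rule member_le_sum) (use assms in auto)
  finally show ?thesis .
qed

lemma restr_empty[simp]: "restr {} c = (\<lambda>_. 0)" by (simp add: restr_def)

lemma marg_empty: "marg {} P b = (if b = (\<lambda>_. 0) then sum P UNIV else 0)"
  unfolding marg_def by (cases "b = (\<lambda>_. 0)") auto

lemma suppd_marg: "suppd S (marg S P)"
  unfolding suppd_def marg_def
proof (intro allI impI)
  fix b assume "(\<Sum>c\<in>UNIV. if restr S c = b then P c else 0) \<noteq> 0"
  then have "\<exists>c. restr S c = b"
  proof (rule contrapos_np)
    assume "\<not> (\<exists>c. restr S c = b)"
    then show "(\<Sum>c\<in>UNIV. if restr S c = b then P c else 0) = 0"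
      by (intro sum.neutral) auto
  qed
  then obtain c where "restr S c = b" by blast
  then show "restr S b = b" by auto
qed


lemma glue:
  fixes P Q :: "('n::finite \<Rightarrow> 'r::{zero,finite}) \<Rightarrow> real"
  assumes P0: "\<forall>c. 0 \<le> P c" and Q0: "\<forall>c. 0 \<le> Q c"
    and sP: "suppd U P" and sQ: "suppd S Q"
    and eq: "marg (U \<inter> S) P = marg (U \<inter> S) Q"
  shows "marg U (\<lambda>c. if restr (U \<union> S) c = c then P (restr U c) * Q (restr S c) / marg (U \<inter> S) Q (restr (U \<inter> S) c) else 0) = P"
    (is "marg U ?G = P")
proof
  fix d
  show "marg U ?G d = P d"
  proof (cases "restr U d = d")
    case False
    have "\<forall>c. restr U c \<noteq> d" using False by (metis restr_idem)
    then have "marg U ?G d = 0" unfolding marg_def by simp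
    moreover have "P d = 0" using False sP by (auto simp: suppd_def)
    ultimately show ?thesis by simp
  next
    case True
    define t where "t = restr (U \<inter> S) d"
    define M where "M = marg (U \<inter> S) Q t"
    define C where "C = {c. restr U c = d \<and> restr (U \<union> S) c = c}"
    define E where "E = {e. restr S e = e \<and> restr (U \<inter> S) e = t}"
    have rUS: "restr (U \<inter> S) c = t" if "restr U c = d" for c
      using that unfolding t_def by (metis inf_sup_ord(1) restr_restr)
    have "marg U ?G d = (\<Sum>c\<in>UNIV. if c \<in> C then P d * Q (restr S c) / M else 0)"
      unfolding marg_def[of U]
      by (intro sum.cong refl) (auto simp: C_def M_def rUS)
    also have "\<dots> = (\<Sum>c\<in>C. P d * Q (restr S c) / M)"
      by (simp add: sum.If_cases)
    also have "\<dots> = P d / M * (\<Sum>c\<in>C. Q (restr S c))"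
      by (simp add: sum_distrib_left)
    also have "(\<Sum>c\<in>C. Q (restr S c)) = (\<Sum>e\<in>E. Q e)"
    proof (rule sum.reindex_bij_witness[where j = "restr S" and i = "\<lambda>e x. if x \<in> U then d x else e x"])
      fix c assume "c \<in> C"
      then have c1: "restr U c = d" and c2: "restr (U \<union> S) c = c" by (auto simp: C_def)
      show "(\<lambda>x. if x \<in> U then d x else restr S c x) = c"
      proof
        fix x show "(if x \<in> U then d x else restr S c x) = c x"
          using fun_cong[OF c1, of x] fun_cong[OF c2, of x] by (auto simp: restr_def)
      qed
      show "restr S c \<in> E" using rUS[OF c1]
        by (auto simp: E_def restr_restr)
      show "Q (restr S c) = Q (restr S c)" by simp
    next
      fix e assume "e \<in> E"
      then have e1: "restr S e = e" and e2: "restr (U \<inter> S) e = t" by (auto simp: E_def)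
      show "restr S (\<lambda>x. if x \<in> U then d x else e x) = e"
      proof
        fix x show "restr S (\<lambda>x. if x \<in> U then d x else e x) x = e x"
          using fun_cong[OF e1, of x] fun_cong[OF e2, of x]
          by (auto simp: restr_def t_def)
      qed
      show "(\<lambda>x. if x \<in> U then d x else e x) \<in> C"
        unfolding C_def
      proof (intro CollectI conjI)
        show "restr U (\<lambda>x. if x \<in> U then d x else e x) = d"
          using True by (auto simp: restr_def fun_eq_iff) (metis (full_types))
        show "restr (U \<union> S) (\<lambda>x. if x \<in> U then d x else e x) = (\<lambda>x. if x \<in> U then d x else e x)"
          using True e1 by (auto simp: restr_def fun_eq_iff)
      qed
    qed
    also have "(\<Sum>e\<in>E. Q e) = M"
    proof -
      have "M = (\<Sum>e\<in>UNIV. if e \<in> E then Q e else 0)"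
        unfolding M_def marg_def
        by (intro sum.cong refl) (use sQ in \<open>auto simp: E_def suppd_def\<close>)
      then show ?thesis by (simp add: sum.If_cases)
    qed
    finally have eqn: "marg U ?G d = P d / M * M" .
    show ?thesis
    proof (cases "M = 0")
      case False then show ?thesis using eqn by simp
    next
      case Mz: True
      have "P d \<le> marg (U \<inter> S) P (restr (U \<inter> S) d)" by (rule marg_ge[OF P0])
      also have "\<dots> = M" using eq by (simp add: M_def t_def)
      finally have "P d = 0" using Mz P0 by (simp add: order_antisym)
      then show ?thesis using eqn by simp
    qed
  qed
qed


lemma glue2:
  fixes P Q :: "('n::finite \<Rightarrow> 'r::{zero,finite}) \<Rightarrow> real"
  assumes P0: "\<forall>c. 0 \<le> P c" and Q0: "\<forall>c. 0 \<le> Q c"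
    and sP: "suppd U P" and sQ: "suppd S Q"
    and eq: "marg (U \<inter> S) P = marg (U \<inter> S) Q"
  shows "marg S (\<lambda>c. if restr (U \<union> S) c = c then P (restr U c) * Q (restr S c) / marg (U \<inter> S) Q (restr (U \<inter> S) c) else 0) = Q"
proof -
  have eq': "marg (S \<inter> U) Q = marg (S \<inter> U) P" using eq by (simp add: Int_commute)
  have "(\<lambda>c. if restr (U \<union> S) c = c then P (restr U c) * Q (restr S c) / marg (U \<inter> S) Q (restr (U \<inter> S) c) else 0)
     = (\<lambda>c. if restr (S \<union> U) c = c then Q (restr S c) * P (restr U c) / marg (S \<inter> U) P (restr (S \<inter> U) c) else 0)"
    by (simp only: Int_commute[of U S] Un_commute[of U S] eq' mult.commute)
  then show ?thesis using glue[OF Q0 P0 sQ sP eq'] by simp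
qed

lemma glue_nonneg:
  fixes P Q :: "('n::finite \<Rightarrow> 'r::{zero,finite}) \<Rightarrow> real"
  assumes P0: "\<forall>c. 0 \<le> P c" and Q0: "\<forall>c. 0 \<le> Q c"
  shows "\<forall>c. 0 \<le> (if restr (U \<union> S) c = c then P (restr U c) * Q (restr S c) / marg (U \<inter> S) Q (restr (U \<inter> S) c) else 0)"
  using P0 Q0 marg_nonneg[OF Q0] by (simp add: divide_nonneg_nonneg)

lemma build:
  fixes Sx :: "'m \<Rightarrow> 'n::finite set" and mu :: "'m \<Rightarrow> ('n \<Rightarrow> 'r::{zero,finite}) \<Rightarrow> real"
  assumes nn: "\<forall>j c. 0 \<le> mu j c" and sp: "\<forall>j. suppd (Sx j) (mu j)" and one: "\<forall>j. sum (mu j) UNIV = 1"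
    and cons: "\<forall>j j' i. i \<in> Sx j \<longrightarrow> i \<in> Sx j' \<longrightarrow> marg {i} (mu j) = marg {i} (mu j')"
    and leaf: "\<forall>J. finite J \<longrightarrow> J \<noteq> {} \<longrightarrow> (\<exists>j\<in>J. card (Sx j \<inter> (\<Union>k\<in>J-{j}. Sx k)) \<le> 1)"
    and fin: "finite J"
  shows "\<exists>P. (\<forall>c. 0 \<le> P c) \<and> suppd (\<Union>k\<in>J. Sx k) P \<and> sum P UNIV = 1 \<and> (\<forall>j\<in>J. marg (Sx j) P = mu j)"
  using fin
proof (induction J rule: finite_psubset_induct)
  case (psubset J)
  show ?case
  proof (cases "J = {}")
    case True
    let ?P = "\<lambda>c::'n \<Rightarrow> 'r. if c = (\<lambda>_. 0) then 1 else (0::real)"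
    have "suppd (\<Union>k\<in>J. Sx k) ?P" using True by (auto simp: suppd_def)
    moreover have "sum ?P UNIV = 1" by (simp add: sum.delta')
    ultimately show ?thesis using True by (intro exI[of _ ?P]) auto
  next
    case False
    obtain j0 where j0: "j0 \<in> J" and cd: "card (Sx j0 \<inter> (\<Union>k\<in>J-{j0}. Sx k)) \<le> 1"
      using leaf psubset.hyps False by blast
    define J' where "J' = J - {j0}"
    have "J' \<subset> J" using j0 by (auto simp: J'_def)
    then obtain P' where P'0: "\<forall>c. 0 \<le> P' c" and sP': "suppd (\<Union>k\<in>J'. Sx k) P'"
      and one': "sum P' UNIV = 1" and mP': "\<forall>j\<in>J'. marg (Sx j) P' = mu j"
      using psubset.IH by blast
    define U where "U = (\<Union>k\<in>J'. Sx k)"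
    define S where "S = Sx j0"
    have cd': "card (U \<inter> S) \<le> 1" using cd by (simp add: U_def S_def J'_def Int_commute)
    have eq: "marg (U \<inter> S) P' = marg (U \<inter> S) (mu j0)"
    proof (cases "U \<inter> S = {}")
      case True
      then show ?thesis using one' one by (simp add: marg_empty fun_eq_iff)
    next
      case False
      then obtain v where v: "v \<in> U \<inter> S" by blast
      have "\<forall>a\<in>U \<inter> S. \<forall>b\<in>U \<inter> S. a = b" using cd' card_le_Suc0_iff_eq[of "U \<inter> S"] by simp
      then have Uv: "U \<inter> S = {v}" using v by blast
      obtain k where k: "k \<in> J'" "v \<in> Sx k" using v by (auto simp: U_def)
      have vj0: "v \<in> Sx j0" using v S_def by simp
      have "marg {v} P' = marg {v} (marg (Sx k) P')" using k by (simp add: marg_marg)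
      also have "\<dots> = marg {v} (mu k)" using mP' k by simp
      also have "\<dots> = marg {v} (mu j0)" using cons k(2) vj0 by blast
      finally show ?thesis using Uv by simp
    qed
    let ?G = "\<lambda>c. if restr (U \<union> S) c = c then P' (restr U c) * mu j0 (restr S c) / marg (U \<inter> S) (mu j0) (restr (U \<inter> S) c) else 0"
    have nnj: "\<forall>c. 0 \<le> mu j0 c" using nn by blast
    have sj: "suppd S (mu j0)" using sp by (simp add: S_def)
    have sPU: "suppd U P'" using sP' by (simp add: U_def)
    have g1: "marg U ?G = P'" by (rule glue[OF P'0 nnj sPU sj eq])
    have g2: "marg S ?G = mu j0" by (rule glue2[OF P'0 nnj sPU sj eq])
    have UJ: "U \<union> S = (\<Union>k\<in>J. Sx k)" using j0 by (auto simp: U_def S_def J'_def)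
    have "\<forall>c. 0 \<le> ?G c" by (rule glue_nonneg[OF P'0 nnj])
    moreover have "suppd (\<Union>k\<in>J. Sx k) ?G" unfolding UJ[symmetric] suppd_def by auto
    moreover have "sum ?G UNIV = 1" using sum_marg[of U ?G] g1 one' by simp
    moreover have "\<forall>j\<in>J. marg (Sx j) ?G = mu j"
    proof
      fix j assume j: "j \<in> J"
      show "marg (Sx j) ?G = mu j"
      proof (cases "j = j0")
        case True then show ?thesis using g2 by (simp add: S_def)
      next
        case False
        then have jJ': "j \<in> J'" using j by (simp add: J'_def)
        then have "Sx j \<subseteq> U" by (auto simp: U_def)
        then have "marg (Sx j) ?G = marg (Sx j) (marg U ?G)" by (simp add: marg_marg)
        then show ?thesis using g1 mP' jJ' by simp
      qed
    qed
    ultimately show ?thesis by - (rule exI[of _ ?G], intro conjI, assumption+)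
  qed
qed


lemma walk_cycle:
  fixes x :: "nat \<Rightarrow> 'v::finite"
  assumes irr: "\<And>a. \<not> E a a" and adj: "\<And>k. E (x k) (x (Suc k))"
    and nb: "\<And>k. x (Suc (Suc k)) \<noteq> x k"
  shows "graph_has_cycle E"
proof -
  have "\<not> inj x"
  proof
    assume "inj x"
    moreover have "finite (range x)" by simp
    ultimately have "finite (UNIV :: nat set)" using finite_imageD by blast
    then show False by simp
  qed
  then obtain a b where ab: "a \<noteq> b" "x a = x b" unfolding inj_def by blast
  have ex: "\<exists>l. \<exists>k<l. x k = x l"
  proof (cases "a < b")
    case True then show ?thesis using ab by blast
  next
    case False then have "b < a" using ab by simp
    then show ?thesis using ab by metis
  qed
  define l where "l = (LEAST l. \<exists>k<l. x k = x l)"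
  obtain k where k: "k < l" "x k = x l" using LeastI_ex[OF ex] unfolding l_def by blast
  have minl: "\<not> (\<exists>k<l'. x k = x l')" if "l' < l" for l'
    using not_less_Least[OF that[unfolded l_def]] l_def by simp
  have "l \<noteq> Suc k" using irr adj[of k] k by metis
  moreover have "l \<noteq> Suc (Suc k)" using nb[of k] k by metis
  ultimately have l3: "l \<ge> k + 3" using k by linarith
  define vs where "vs = map x [k..<l]"
  have len: "length vs = l - k" by (simp add: vs_def)
  have nth: "vs ! i = x (k + i)" if "i < l - k" for i using that by (simp add: vs_def)
  have "inj_on x {k..<l}"
  proof (rule inj_onI)
    fix a b assume a: "a \<in> {k..<l}" and b: "b \<in> {k..<l}" and e: "x a = x b"
    show "a = b"
    proof (rule ccontr)
      assume "a \<noteq> b"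
      then have "a < b \<or> b < a" by arith
      then show False
      proof
        assume "a < b" then show False using minl[of b] b e by auto
      next
        assume "b < a" then show False using minl[of a] a e by auto
      qed
    qed
  qed
  then have dist: "distinct vs" by (simp add: vs_def distinct_map)
  have cons: "\<forall>i < length vs - 1. E (vs ! i) (vs ! Suc i)"
  proof (intro allI impI)
    fix i assume "i < length vs - 1"
    then have "i < l - k" "Suc i < l - k" using len by auto
    then show "E (vs ! i) (vs ! Suc i)" using nth adj[of "k + i"] by simp
  qed
  have "vs \<noteq> []" using len l3 by auto
  then have "last vs = vs ! (length vs - 1)" by (rule last_conv_nth)
  also have "\<dots> = x (l - 1)" using len l3 nth[of "l - k - 1"] by simp
  finally have lst: "last vs = x (l - 1)" .
  have hd: "hd vs = x k" using l3 by (simp add: vs_def hd_map)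
  have "E (last vs) (hd vs)" using adj[of "l - 1"] l3 k lst hd by simp
  then show ?thesis unfolding graph_has_cycle_def
    using dist cons len l3 by (intro exI[of _ vs]) auto
qed

lemma tanner_adj_simps:
  "tanner_adj H (Inr j) (Inl i) \<longleftrightarrow> H j i \<noteq> 0"
  "tanner_adj H (Inl i) (Inr j) \<longleftrightarrow> H j i \<noteq> 0"
  "\<not> tanner_adj H a a"
  by (auto simp: tanner_adj_def)

lemma tree_leaf:
  fixes H :: "'m::finite \<Rightarrow> 'n::finite \<Rightarrow> 'r::{ring_1,finite}"
  assumes nc: "\<not> graph_has_cycle (tanner_adj H)" and ne: "J \<noteq> {}"
  shows "\<exists>j\<in>J. card (supp_row H j \<inter> (\<Union>k\<in>J-{j}. supp_row H k)) \<le> 1"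
proof (rule ccontr)
  let ?S = "supp_row H"
  assume "\<not> ?thesis"
  then have big: "\<forall>j\<in>J. \<not> card (?S j \<inter> (\<Union>k\<in>J-{j}. ?S k)) \<le> Suc 0" by simp
  have step: "\<exists>p. fst p \<in> J \<and> fst p \<noteq> j \<and> snd p \<in> ?S j \<and> snd p \<in> ?S (fst p) \<and> snd p \<noteq> v"
    if j: "j \<in> J" for j v
  proof -
    let ?A = "?S j \<inter> (\<Union>k\<in>J-{j}. ?S k)"
    have "\<not> (\<forall>a\<in>?A. \<forall>b\<in>?A. a = b)" using big j card_le_Suc0_iff_eq[of ?A] by simp
    then obtain a b where a: "a \<in> ?A" and b: "b \<in> ?A" and abd: "a \<noteq> b" by blast
    obtain c where c: "c \<in> ?A" "c \<noteq> v" using a b abd by metis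
    then obtain j'' where "j'' \<in> J" "j'' \<noteq> j" "c \<in> ?S j''" "c \<in> ?S j" by blast
    then show ?thesis using c by (intro exI[of _ "(j'', c)"]) auto
  qed
  define nxt where "nxt = (\<lambda>(j, v). SOME p. fst p \<in> J \<and> fst p \<noteq> j \<and> snd p \<in> ?S j \<and> snd p \<in> ?S (fst p) \<and> snd p \<noteq> v)"
  obtain j0 where j0: "j0 \<in> J" using ne by blast
  define sq where "sq = (\<lambda>k. (nxt ^^ k) (j0, undefined))"
  have sqS: "sq (Suc k) = nxt (sq k)" for k by (simp add: sq_def)
  have prp: "fst (sq (Suc k)) \<in> J \<and> fst (sq (Suc k)) \<noteq> fst (sq k) \<and> snd (sq (Suc k)) \<in> ?S (fst (sq k))
       \<and> snd (sq (Suc k)) \<in> ?S (fst (sq (Suc k))) \<and> snd (sq (Suc k)) \<noteq> snd (sq k)"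
    if "fst (sq k) \<in> J" for k
  proof -
    obtain j v where jv: "sq k = (j, v)" by force
    have "j \<in> J" using that jv by simp
    from someI_ex[OF step[OF this, of v]]
    show ?thesis unfolding sqS jv nxt_def by simp
  qed
  have inJ: "fst (sq k) \<in> J" for k
  proof (induction k)
    case 0 then show ?case using j0 by (simp add: sq_def)
  next
    case (Suc k) then show ?case using prp by blast
  qed
  have P: "fst (sq (Suc k)) \<noteq> fst (sq k) \<and> snd (sq (Suc k)) \<in> ?S (fst (sq k))
       \<and> snd (sq (Suc k)) \<in> ?S (fst (sq (Suc k))) \<and> snd (sq (Suc k)) \<noteq> snd (sq k)" for k
    using prp[OF inJ[of k]] by blast
  define x :: "nat \<Rightarrow> 'n + 'm" where
    "x = (\<lambda>n. if even n then Inr (fst (sq (n div 2))) else Inl (snd (sq (Suc (n div 2)))))"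
  have adj: "tanner_adj H (x n) (x (Suc n))" for n
  proof (cases "even n")
    case True
    then obtain m where n: "n = 2 * m" by blast
    show ?thesis using P[of m] unfolding n x_def by (simp add: tanner_adj_simps supp_row_def)
  next
    case False
    then obtain m where n: "n = 2 * m + 1" using oddE by blast
    show ?thesis using P[of m] unfolding n x_def by (simp add: tanner_adj_simps supp_row_def)
  qed
  have nb: "x (Suc (Suc n)) \<noteq> x n" for n
  proof (cases "even n")
    case True
    then obtain m where n: "n = 2 * m" by blast
    show ?thesis using P[of m] unfolding n x_def by simp
  next
    case False
    then obtain m where n: "n = 2 * m + 1" using oddE by blast
    show ?thesis using P[of "Suc m"] unfolding n x_def by simp
  qed
  have "graph_has_cycle (tanner_adj H)"
    by (rule walk_cycle[of "tanner_adj H" x]) (use adj nb tanner_adj_simps(3) in auto)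
  then show False using nc by simp
qed


lemma var_has_check:
  fixes H :: "'m \<Rightarrow> 'n \<Rightarrow> 'r::zero"
  assumes "graph_connected (tanner_adj H)"
  shows "\<exists>j. H j i \<noteq> 0"
proof -
  have "(tanner_adj H)\<^sup>*\<^sup>* (Inl i) (Inr undefined)" using assms by (simp add: graph_connected_def)
  then show ?thesis
  proof (cases rule: converse_rtranclpE)
    case base then show ?thesis by simp
  next
    case (step y) then show ?thesis by (auto simp: tanner_adj_def)
  qed
qed

lemma sum_supp_row:
  fixes H :: "'m \<Rightarrow> 'n::finite \<Rightarrow> 'r::ring_1"
  shows "(\<Sum>i\<in>supp_row H j. c i * H j i) = (\<Sum>i\<in>UNIV. c i * H j i)"
  by (rule sum.mono_neutral_left) (auto simp: supp_row_def)

lemma restr_local_code: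
  fixes H :: "'m \<Rightarrow> 'n::finite \<Rightarrow> 'r::ring_1"
  assumes "c \<in> code H"
  shows "restr (supp_row H j) c \<in> local_code H j"
proof -
  have "(\<Sum>i\<in>supp_row H j. restr (supp_row H j) c i * H j i) = (\<Sum>i\<in>supp_row H j. c i * H j i)"
    by (intro sum.cong refl) (simp add: restr_def)
  also have "\<dots> = 0" using assms by (simp add: sum_supp_row code_def)
  finally show ?thesis by (auto simp: local_code_def restr_def)
qed

lemma convex_Qbar:
  fixes H :: "'m \<Rightarrow> 'n::finite \<Rightarrow> 'r::{ring_1,finite}"
  shows "convex (polytope_Qbar H)"
  unfolding convex_def
proof (intro ballI allI impI)
  fix f g :: "real ^ ('n \<times> 'r)" and u v :: real
  assume f: "f \<in> polytope_Qbar H" and g: "g \<in> polytope_Qbar H" and u: "0 \<le> u" and v: "0 \<le> v" and uv: "u + v = 1"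
  obtain wf where wf: "(f, wf) \<in> polytope_Q H" using f by (auto simp: polytope_Qbar_def)
  obtain wg where wg: "(g, wg) \<in> polytope_Q H" using g by (auto simp: polytope_Qbar_def)
  define w where "w = (\<lambda>j b. u * wf j b + v * wg j b)"
  have "(u *\<^sub>R f + v *\<^sub>R g, w) \<in> polytope_Q H"
    unfolding polytope_Q_def
  proof (intro CollectI case_prodI conjI allI ballI impI)
    fix i show "(u *\<^sub>R f + v *\<^sub>R g) $ (i, 0) = 0" using wf wg by (simp add: polytope_Q_def)
  next
    fix j b assume "b \<in> local_code H j"
    then show "0 \<le> w j b" using wf wg u v by (simp add: polytope_Q_def w_def)
  next
    fix j
    have "(\<Sum>b\<in>local_code H j. w j b) = u * (\<Sum>b\<in>local_code H j. wf j b) + v * (\<Sum>b\<in>local_code H j. wg j b)"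
      by (simp add: w_def sum.distrib sum_distrib_left)
    then show "(\<Sum>b\<in>local_code H j. w j b) = 1" using wf wg uv by (simp add: polytope_Q_def)
  next
    fix j i and \<alpha> :: 'r assume i: "i \<in> supp_row H j" and a: "\<alpha> \<noteq> 0"
    have "(\<Sum>b\<in>{b \<in> local_code H j. b i = \<alpha>}. w j b) =
       u * (\<Sum>b\<in>{b \<in> local_code H j. b i = \<alpha>}. wf j b) + v * (\<Sum>b\<in>{b \<in> local_code H j. b i = \<alpha>}. wg j b)"
      by (simp add: w_def sum.distrib sum_distrib_left)
    then show "(u *\<^sub>R f + v *\<^sub>R g) $ (i, \<alpha>) = (\<Sum>b\<in>{b \<in> local_code H j. b i = \<alpha>}. w j b)"
      using wf wg i a by (simp add: polytope_Q_def)
  qed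
  then show "u *\<^sub>R f + v *\<^sub>R g \<in> polytope_Qbar H" by (auto simp: polytope_Qbar_def)
qed

lemma Xi_in_Qbar:
  fixes H :: "'m \<Rightarrow> 'n::finite \<Rightarrow> 'r::{ring_1,finite}"
  assumes c: "c \<in> code H"
  shows "Xi c \<in> polytope_Qbar H"
proof -
  define w where "w = (\<lambda>j b. if b = restr (supp_row H j) c then 1 else (0::real))"
  have lc: "restr (supp_row H j) c \<in> local_code H j" for j by (rule restr_local_code[OF c])
  have "(Xi c, w) \<in> polytope_Q H"
    unfolding polytope_Q_def
  proof (intro CollectI case_prodI conjI allI ballI impI)
    fix i show "Xi c $ (i, 0) = 0" by (simp add: Xi_def)
  next
    fix j b show "0 \<le> w j b" by (simp add: w_def)
  next
    fix j show "(\<Sum>b\<in>local_code H j. w j b) = 1" using lc[of j] by (simp add: w_def sum.delta)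
  next
    fix j i and \<alpha> :: 'r assume i: "i \<in> supp_row H j" and a: "\<alpha> \<noteq> 0"
    have "(\<Sum>b\<in>{b \<in> local_code H j. b i = \<alpha>}. w j b) = (if restr (supp_row H j) c \<in> {b \<in> local_code H j. b i = \<alpha>} then 1 else 0)"
      by (simp add: w_def sum.delta)
    also have "\<dots> = (if c i = \<alpha> then 1 else 0)" using lc[of j] i by (simp add: restr_def)
    finally show "Xi c $ (i, \<alpha>) = (\<Sum>b\<in>{b \<in> local_code H j. b i = \<alpha>}. w j b)"
      using a by (simp add: Xi_def)
  qed
  then show ?thesis by (auto simp: polytope_Qbar_def)
qed

lemma marg_single:
  "marg {i} P b0 = (if restr {i} b0 = b0 then (\<Sum>c\<in>UNIV. if c i = b0 i then P c else 0) else 0)"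
proof (cases "restr {i} b0 = b0")
  case True
  have "restr {i} c = b0 \<longleftrightarrow> c i = b0 i" for c
  proof
    assume "restr {i} c = b0" then show "c i = b0 i" by (auto simp: restr_def)
  next
    assume "c i = b0 i" then show "restr {i} c = b0" using True by (auto simp: restr_def fun_eq_iff) (metis (full_types))
  qed
  then show ?thesis using True by (simp add: marg_def)
next
  case False
  then have "\<forall>c. restr {i} c \<noteq> b0" by (metis restr_idem)
  then show ?thesis using False by (simp add: marg_def)
qed


theorem proposition4:
  fixes H :: "'m::finite \<Rightarrow> 'n::finite \<Rightarrow> 'r::{ring_1,finite}"
  assumes "graph_is_tree (tanner_adj H)"
  shows "polytope_Qbar H = convex hull (Xi ` code H)"
proof
  show "convex hull (Xi ` code H) \<subseteq> polytope_Qbar H"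
    by (rule hull_minimal) (auto intro: Xi_in_Qbar convex_Qbar)
next
  have conn: "graph_connected (tanner_adj H)" and nc: "\<not> graph_has_cycle (tanner_adj H)"
    using assms by (auto simp: graph_is_tree_def)
  show "polytope_Qbar H \<subseteq> convex hull (Xi ` code H)"
  proof
    fix f assume "f \<in> polytope_Qbar H"
    then obtain w where fw: "(f, w) \<in> polytope_Q H" by (auto simp: polytope_Qbar_def)
    have f0: "\<And>i. f $ (i, 0) = 0" using fw by (simp add: polytope_Q_def)
    have w0: "\<And>j b. b \<in> local_code H j \<Longrightarrow> 0 \<le> w j b" using fw by (simp add: polytope_Q_def)
    have w1: "\<And>j. (\<Sum>b\<in>local_code H j. w j b) = 1" using fw by (simp add: polytope_Q_def)
    have fc: "\<And>j i \<alpha>. i \<in> supp_row H j \<Longrightarrow> \<alpha> \<noteq> 0 \<Longrightarrow> f $ (i, \<alpha>) = (\<Sum>b\<in>{b \<in> local_code H j. b i = \<alpha>}. w j b)"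
      using fw by (simp add: polytope_Q_def)
    define mu where "mu = (\<lambda>j b. if b \<in> local_code H j then w j b else (0::real))"
    let ?Sx = "supp_row H"
    have nn: "\<forall>j c. 0 \<le> mu j c" using w0 by (simp add: mu_def)
    have sp: "\<forall>j. suppd (?Sx j) (mu j)"
      by (auto simp: suppd_def mu_def local_code_def restr_def fun_eq_iff)
    have one: "\<forall>j. sum (mu j) UNIV = 1"
    proof
      fix j
      have "sum (mu j) UNIV = sum (w j) (UNIV \<inter> local_code H j)"
        unfolding mu_def by (rule sum.inter_restrict[symmetric]) simp
      then show "sum (mu j) UNIV = 1" using w1[of j] by simp
    qed
    define g where "g = (\<lambda>j i \<alpha>. \<Sum>b\<in>{b \<in> local_code H j. b i = \<alpha>}. w j b)"
    have mug: "(\<Sum>c\<in>UNIV. if c i = \<alpha> then mu j c else 0) = g j i \<alpha>" for j i \<alpha>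
    proof -
      have "(\<Sum>c\<in>UNIV. if c i = \<alpha> then mu j c else 0) = (\<Sum>c\<in>UNIV. if c \<in> {b \<in> local_code H j. b i = \<alpha>} then w j c else 0)"
        by (intro sum.cong refl) (auto simp: mu_def)
      also have "\<dots> = sum (w j) (UNIV \<inter> {b \<in> local_code H j. b i = \<alpha>})"
        by (rule sum.inter_restrict[symmetric]) simp
      finally show ?thesis by (simp add: g_def)
    qed
    have gsum: "sum (g j i) UNIV = 1" for j i
    proof -
      have "sum (g j i) UNIV = (\<Sum>b\<in>local_code H j. w j b)"
        unfolding g_def by (rule sum.group) auto
      then show ?thesis using w1 by simp
    qed
    have geq: "g j i = g j' i" if "i \<in> ?Sx j" "i \<in> ?Sx j'" for j j' i
    proof
      fix \<alpha>
      have ne: "g j i \<beta> = g j' i \<beta>" if "\<beta> \<noteq> 0" for \<beta>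
        using fc[OF \<open>i \<in> ?Sx j\<close> that] fc[OF \<open>i \<in> ?Sx j'\<close> that] by (simp add: g_def)
      have "g j i 0 = 1 - sum (g j i) (UNIV - {0})" using gsum[of j i] sum.remove[of UNIV 0 "g j i"] by simp
      also have "sum (g j i) (UNIV - {0}) = sum (g j' i) (UNIV - {0})" by (intro sum.cong refl) (simp add: ne)
      also have "1 - \<dots> = g j' i 0" using gsum[of j' i] sum.remove[of UNIV 0 "g j' i"] by simp
      finally have "g j i 0 = g j' i 0" .
      then show "g j i \<alpha> = g j' i \<alpha>" using ne by (cases "\<alpha> = 0") auto
    qed
    have cons: "\<forall>j j' i. i \<in> ?Sx j \<longrightarrow> i \<in> ?Sx j' \<longrightarrow> marg {i} (mu j) = marg {i} (mu j')"
    proof (intro allI impI)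
      fix j j' i assume h: "i \<in> ?Sx j" "i \<in> ?Sx j'"
      have gg: "g j i = g j' i" by (rule geq[OF h])
      show "marg {i} (mu j) = marg {i} (mu j')"
      proof
        fix b
        show "marg {i} (mu j) b = marg {i} (mu j') b"
          unfolding marg_single mug gg ..
      qed
    qed
    have leaf: "\<forall>J. finite J \<longrightarrow> J \<noteq> {} \<longrightarrow> (\<exists>j\<in>J. card (?Sx j \<inter> (\<Union>k\<in>J-{j}. ?Sx k)) \<le> 1)"
      using tree_leaf[OF nc] by blast
    obtain P where P0: "\<forall>c. 0 \<le> P c" and P1: "sum P UNIV = 1" and Pm: "\<forall>j. marg (?Sx j) P = mu j"
      using build[OF nn sp one cons leaf, of UNIV] by auto
    have Pcode: "c \<in> code H" if "P c \<noteq> 0" for c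
    proof -
      have "(\<Sum>i\<in>UNIV. c i * H j i) = 0" for j
      proof -
        have "P c \<le> marg (?Sx j) P (restr (?Sx j) c)" by (rule marg_ge[OF P0])
        moreover have "0 < P c" using P0 that by (simp add: order_less_le)
        ultimately have "0 < marg (?Sx j) P (restr (?Sx j) c)" by linarith
        then have "0 < mu j (restr (?Sx j) c)" using Pm by simp
        then have "restr (?Sx j) c \<in> local_code H j" by (auto simp: mu_def split: if_splits)
        then have "(\<Sum>i\<in>?Sx j. restr (?Sx j) c i * H j i) = 0" by (simp add: local_code_def)
        moreover have "(\<Sum>i\<in>?Sx j. restr (?Sx j) c i * H j i) = (\<Sum>i\<in>?Sx j. c i * H j i)"
          by (intro sum.cong refl) (simp add: restr_def)
        ultimately show ?thesis by (simp add: sum_supp_row)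
      qed
      then show ?thesis by (simp add: code_def)
    qed
    have sumcode: "sum h (code H) = sum h UNIV" if "\<And>c. P c = 0 \<Longrightarrow> h c = 0" for h :: "_ \<Rightarrow> 'z::comm_monoid_add"
      by (rule sum.mono_neutral_left) (use that Pcode in auto)
    have feq: "f = (\<Sum>c\<in>code H. P c *\<^sub>R Xi c)"
    proof -
      have "f $ p = (\<Sum>c\<in>UNIV. P c * Xi c $ p)" for p
      proof (cases p)
        case (Pair i \<alpha>)
        show ?thesis
        proof (cases "\<alpha> = 0")
          case True then show ?thesis using Pair f0 by (simp add: Xi_def)
        next
          case False
          obtain j where j: "i \<in> ?Sx j" using var_has_check[OF conn, of i] by (auto simp: supp_row_def)
          have "f $ p = g j i \<alpha>" using fc[OF j False] Pair by (simp add: g_def)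
          also have "\<dots> = (\<Sum>b\<in>UNIV. if b i = \<alpha> then marg (?Sx j) P b else 0)" unfolding Pm[rule_format] using mug[of i \<alpha> j] by simp
          also have "\<dots> = (\<Sum>b\<in>UNIV. \<Sum>c\<in>UNIV. if b i = \<alpha> \<and> restr (?Sx j) c = b then P c else 0)"
            unfolding marg_def by (intro sum.cong refl) (auto intro: sum.neutral)
          also have "\<dots> = (\<Sum>c\<in>UNIV. \<Sum>b\<in>UNIV. if b i = \<alpha> \<and> restr (?Sx j) c = b then P c else 0)"
            by (rule sum.swap)
          also have "\<dots> = (\<Sum>c\<in>UNIV. if restr (?Sx j) c i = \<alpha> then P c else 0)"
          proof (intro sum.cong refl)
            fix c
            have "(\<Sum>b\<in>UNIV. if b i = \<alpha> \<and> restr (?Sx j) c = b then P c else 0)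
               = (\<Sum>b\<in>UNIV. if restr (?Sx j) c = b then (if b i = \<alpha> then P c else 0) else 0)"
              by (intro sum.cong refl) auto
            then show "(\<Sum>b\<in>UNIV. if b i = \<alpha> \<and> restr (?Sx j) c = b then P c else 0) = (if restr (?Sx j) c i = \<alpha> then P c else 0)"
              by (simp add: sum.delta)
          qed
          also have "\<dots> = (\<Sum>c\<in>UNIV. P c * Xi c $ p)"
            using j False Pair by (intro sum.cong refl) (simp add: restr_def Xi_def)
          finally show ?thesis .
        qed
      qed
      moreover have "(\<Sum>c\<in>code H. P c *\<^sub>R Xi c) $ p = (\<Sum>c\<in>UNIV. P c * Xi c $ p)" for p
        by (simp add: sumcode)
      ultimately show ?thesis by (simp add: vec_eq_iff)
    qed
    have "(\<Sum>c\<in>code H. P c *\<^sub>R Xi c) \<in> convex hull (Xi ` code H)"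
    proof (rule convex_sum)
      show "finite (code H)" by simp
      show "convex (convex hull (Xi ` code H))" by (rule convex_convex_hull)
      show "sum P (code H) = 1" using P1 sumcode[of P] by simp
      show "\<And>i. i \<in> code H \<Longrightarrow> 0 \<le> P i" using P0 by simp
      show "\<And>i. i \<in> code H \<Longrightarrow> Xi i \<in> convex hull (Xi ` code H)"
        by (simp add: hull_inc)
    qed
    then show "f \<in> convex hull (Xi ` code H)" using feq by simp
  qed
qed

end
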